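(* Let $(X_t)_{t\ge1}$ be a strictly stationary time series with continuous stationary distribution function $F$, and let $M_m=\max(X_1,\dots,X_m)$. Let $\gamma\in\mathbb{R}$, $\rho\le 0$, $\theta\in(0,1]$, and let $b(t)=Q(e^{-1/t})$ for $t>1$, where $Q$ is the generalized inverse of $F$. Assume that there exist a positive function $a(\cdot)$ and a function $A(\cdot)$ of eventually constant sign with $A(s)\to0$ as $s\to\infty$ such that for all $x>0$ $$\lim_{s\to\infty}\frac{1}{A(s)}\left(\frac{b(sx)-b(s)}{a(s)}-\int_1^x u^{\gamma-1}\,du\right)=\mathcal{H}_{\gamma,\rho}(x):=\int_1^x v^{\gamma-1}\int_1^v u^{\rho-1}\,du\,dv,$$ and that, for integer sequences $m=m_n\to\infty$ and $k=k_n\to\infty$, $\sqrt{k}A(m)\to\lambda\in\mathbb{R}$ as $n\to\infty$. Define $a_\theta(m)=a(m)\theta^\gamma$ and $b_\theta(m)=b(m)+a(m)(\theta^\gamma-1)/\gamma$ (with $(\theta^\gamma-1)/\gamma=\log\theta$ if $\gamma=0$). Then, as $n\to\infty$, $$\sqrt{k}\left(\frac{a_\theta(m)}{a(\theta m)}-1\right)=-\lambda\frac{\theta^\rho-1}{\rho}+o(1),$$ $$\sqrt{k}\,\frac{b_\theta(m)-b(\theta m)}{a(\theta m)}=\lambda\theta^\rho\mathcal{H}_{\gamma,\rho}(\theta^{-1})+\lambda\frac{\theta^\rho-1}{\rho}\,\frac{\theta^{-\gamma}-1}{\gamma}+o(1),$$ (with $(\theta^\rho-1)/\rho=\log\theta$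 if $\rho=0$). Moreover, if in addition $\lim_{m\to\infty}\mathbb{P}(M_m\le a_\theta(m)z+b_\theta(m))=G_\gamma(z)$ for all $z$ (which holds when $F$ is in the max-domain of attraction of $G_\gamma$ and the series has extremal index $\theta$), then for all $z$, $$\lim_{n\to\infty}\mathbb{P}\big(M_m\le a(\theta m)z+b(\theta m)\big)=G_\gamma(z).$$
   Context: $G_\gamma(z)=\exp(-(1+\gamma z)_+^{-1/\gamma})$ is the generalized extreme value (GEV) distribution function ($G_0(z)=\exp(-e^{-z})$), with $(x)_+=\max(0,x)$. The generalized inverse is $Q(\tau)=\inf\{x: F(x)\ge\tau\}$. A series has extremal index $\theta\in(0,1]$ if for every $x>0$ and every sequence $u_m$ with $m(1-F(u_m))\to x$ one has $\mathbb{P}(M_m\le u_m)\to e^{-\theta x}$. *)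

theory Defs
  imports "HOL-Probability.Probability"
begin

definition boxcox :: "real \<Rightarrow> real \<Rightarrow> real" where
  "boxcox g x = (if g = 0 then ln x else (x powr g - 1) / g)"

definition H2 :: "real \<Rightarrow> real \<Rightarrow> real \<Rightarrow> real" where
  "H2 g r x = (LBINT v=ereal 1..ereal x. v powr (g - 1) * (LBINT u=ereal 1..ereal v. u powr (r - 1)))"

definition GEV :: "real \<Rightarrow> real \<Rightarrow> real" where
  "GEV g z = (if g = 0 then exp (- exp (- z))
              else if 1 + g * z \<le> 0 then (if g > 0 then 0 else 1)
              else exp (- ((1 + g * z) powr (- 1 / g))))"

definition gen_inv :: "(real \<Rightarrow> real) \<Rightarrow> real \<Rightarrow> real" where
  "gen_inv F tau = Inf {x. F x \<ge> tau}"

definition Mmax :: "(nat \<Rightarrow> 'a \<Rightarrow> real) \<Rightarrow> nat \<Rightarrow> 'a \<Rightarrow> real" where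
  "Mmax X m \<omega> = Max ((\<lambda>i. X i \<omega>) ` {1..m})"

definition strictly_stationary :: "'a measure \<Rightarrow> (nat \<Rightarrow> 'a \<Rightarrow> real) \<Rightarrow> bool" where
  "strictly_stationary M X \<longleftrightarrow>
     (\<forall>t. X t \<in> borel_measurable M) \<and>
     (\<forall>n h. distr M (Pi\<^sub>M {1..n} (\<lambda>_. borel)) (\<lambda>\<omega>. \<lambda>i\<in>{1..n}. X (i + h) \<omega>)
          = distr M (Pi\<^sub>M {1..n} (\<lambda>_. borel)) (\<lambda>\<omega>. \<lambda>i\<in>{1..n}. X i \<omega>))"

end

theory Submission
  imports Defs "HOL-Real_Asymp.Real_Asymp"
begin


lemma boxcox_deriv:
  assumes "v > 0"
  shows "(boxcox g has_real_derivative v powr (g - 1)) (at v)"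
proof (cases "g = 0")
  case True
  have e: "boxcox g = ln" using True by (auto simp: boxcox_def)
  show ?thesis unfolding e using DERIV_ln_divide[OF assms] True assms
    by (simp add: powr_minus_divide)
next
  case False
  have e: "boxcox g = (\<lambda>v. (v powr g - 1) / g)" using False by (auto simp: boxcox_def fun_eq_iff)
  have "((\<lambda>v. (v powr g - 1) / g) has_real_derivative (g * v powr (g - 1) - 0) / g) (at v)"
    by (intro DERIV_cdivide DERIV_diff has_real_derivative_powr assms DERIV_const)
  then show ?thesis unfolding e using False by simp
qed

lemma int_powr_boxcox:
  assumes "x > 0"
  shows "(LBINT u=ereal 1..ereal x. u powr (g-1)) = boxcox g x"
proof -
  have "(LBINT u=ereal 1..ereal x. u powr (g-1)) = boxcox g x - boxcox g 1"
  proof (rule interval_integral_FTC_finite)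
    show "continuous_on {min 1 x..max 1 x} (\<lambda>u. u powr (g - 1))"
      using assms by (intro continuous_intros) auto
    fix y assume "min 1 x \<le> y" "y \<le> max 1 x"
    then have "y > 0" using assms by auto
    then show "(boxcox g has_vector_derivative y powr (g - 1)) (at y within {min 1 x..max 1 x})"
      using boxcox_deriv has_real_derivative_iff_has_vector_derivative has_field_derivative_at_within by blast
  qed
  then show ?thesis by (simp add: boxcox_def)
qed

lemma boxcox_mult:
  assumes "x > 0" "y > 0"
  shows "boxcox g (x * y) = x powr g * boxcox g y + boxcox g x"
  using assms by (auto simp: boxcox_def ln_mult powr_mult field_simps)

lemma boxcox_one[simp]: "boxcox g 1 = 0"
  by (simp add: boxcox_def)

lemma H2_alt:
  assumes "x > 0"
  shows "H2 g r x = (LBINT v=ereal 1..ereal x. v powr (g - 1) * boxcox r v)"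
  unfolding H2_def
proof (rule interval_integral_cong)
  fix v assume "v \<in> einterval (min (ereal 1) (ereal x)) (max (ereal 1) (ereal x))"
  then have "v > 0" using assms by (auto simp: einterval_def min_def max_def split: if_splits)
  then show "v powr (g - 1) * (LBINT u=ereal 1..ereal v. u powr (r - 1)) = v powr (g - 1) * boxcox r v"
    by (simp add: int_powr_boxcox)
qed

lemma H2_one[simp]: "H2 g r 1 = 0"
  by (simp add: H2_def)

lemma H2_deriv:
  assumes "y > 0"
  shows "(H2 g r has_real_derivative y powr (g - 1) * boxcox r y) (at y)"
proof -
  define a0 where "a0 = min 1 y / 2"
  define b0 where "b0 = max 1 y + 1"
  have a0: "a0 > 0" "a0 < y" "a0 \<le> 1" using assms by (auto simp: a0_def min_def)
  have b0: "y < b0" "1 \<le> b0" by (auto simp: b0_def)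
  have cont: "continuous_on {a0..b0} (\<lambda>v. v powr (g - 1) * boxcox r v)"
  proof -
    have "continuous_on {a0..b0} (boxcox r)"
      using a0 by (intro DERIV_continuous_on[where D="\<lambda>v. v powr (r - 1)"] boxcox_deriv
          has_field_derivative_at_within) auto
    then show ?thesis using a0 by (intro continuous_intros) auto
  qed
  have "((\<lambda>u. LBINT v=ereal 1..ereal u. v powr (g - 1) * boxcox r v) has_vector_derivative
        y powr (g - 1) * boxcox r y) (at y within {a0..b0})"
    using interval_integral_FTC2[OF a0(3) b0(2) cont, of y] a0 b0 by simp
  then have "((\<lambda>u. LBINT v=ereal 1..ereal u. v powr (g - 1) * boxcox r v) has_real_derivative
        y powr (g - 1) * boxcox r y) (at y)"
    using a0 b0 by (simp add: at_within_Icc_at has_real_derivative_iff_has_vector_derivative)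
  then show ?thesis
    by (rule has_field_derivative_transform_within_open[where S="{0<..}"]) (use assms H2_alt in auto)
qed

lemma H2_mult:
  assumes "x > 0" "y > 0"
  shows "H2 g r (x * y) - H2 g r x = x powr (g + r) * H2 g r y + x powr g * boxcox r x * boxcox g y"
proof -
  define \<Phi> where "\<Phi> = (\<lambda>y. H2 g r (x * y) - H2 g r x - x powr (g + r) * H2 g r y
      - x powr g * boxcox r x * boxcox g y)"
  have d: "(\<Phi> has_field_derivative 0) (at y within {0<..})" if "y > 0" for y
  proof -
    have xy: "x * y > 0" using assms that by simp
    have dH: "((\<lambda>y. H2 g r (x * y)) has_real_derivative (x * y) powr (g - 1) * boxcox r (x * y) * x) (at y)"
      using DERIV_chain2[of "H2 g r" _ "\<lambda>y. x * y", OF H2_deriv[OF xy]] DERIV_cmult_Id[of x y] by simp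
    have "(\<Phi> has_field_derivative
        ((x * y) powr (g - 1) * boxcox r (x * y) * x - 0 - x powr (g + r) * (y powr (g - 1) * boxcox r y)
         - x powr g * boxcox r x * y powr (g - 1))) (at y)"
      unfolding \<Phi>_def
      by (intro DERIV_diff DERIV_cmult DERIV_const boxcox_deriv that
          dH H2_deriv)
    moreover have "(x * y) powr (g - 1) * boxcox r (x * y) * x - 0 - x powr (g + r) * (y powr (g - 1) * boxcox r y)
         - x powr g * boxcox r x * y powr (g - 1) = 0"
    proof -
      have "(x * y) powr (g - 1) * x = x powr g * y powr (g - 1)"
        using assms that by (simp add: powr_mult powr_diff field_simps)
      moreover have "x powr (g + r) = x powr g * x powr r" by (simp add: powr_add)
      ultimately show ?thesis using boxcox_mult[OF assms(1) that, of r]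
        by (simp add: algebra_simps) (metis mult.assoc mult.commute)
    qed
    ultimately show ?thesis using has_field_derivative_at_within by metis
  qed
  obtain c where c: "\<And>y. y \<in> {0<..} \<Longrightarrow> \<Phi> y = c"
    using has_field_derivative_zero_constant[of "{0<..}" \<Phi>] d by auto
  have "\<Phi> 1 = 0" by (simp add: \<Phi>_def)
  then have "\<Phi> y = 0" using c[of 1] c[of y] assms by auto
  then show ?thesis by (simp add: \<Phi>_def)
qed

lemma boxcox_two_ne: "boxcox g 2 \<noteq> 0"
proof (cases "g = 0")
  case False
  have "(2::real) powr g \<noteq> 1"
  proof
    assume "(2::real) powr g = 1"
    then have "ln ((2::real) powr g) = 0" by simp
    then show False using False by (simp add: ln_powr)
  qed
  then show ?thesis using False by (simp add: boxcox_def)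
qed (simp add: boxcox_def)

lemma H2_indep:
  "\<exists>y1 y2. y1 > 0 \<and> y2 > 0 \<and> boxcox g y1 * H2 g r y2 - boxcox g y2 * H2 g r y1 \<noteq> 0"
proof (rule ccontr)
  assume "\<not> ?thesis"
  then have Z: "\<And>y. y > 0 \<Longrightarrow> boxcox g 2 * H2 g r y - boxcox g y * H2 g r 2 = 0"
    by (metis zero_less_numeral)
  have eq: "boxcox g 2 * boxcox r y = H2 g r 2" if "y > 0" for y
  proof -
    have "((\<lambda>y. boxcox g 2 * H2 g r y - boxcox g y * H2 g r 2) has_real_derivative
        boxcox g 2 * (y powr (g - 1) * boxcox r y) - y powr (g - 1) * H2 g r 2) (at y)"
      by (intro DERIV_diff DERIV_cmult H2_deriv boxcox_deriv[THEN DERIV_cmult_right] that)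
    then have "((\<lambda>y. 0) has_real_derivative
        boxcox g 2 * (y powr (g - 1) * boxcox r y) - y powr (g - 1) * H2 g r 2) (at y)"
      by (rule has_field_derivative_transform_within_open[where S="{0<..}"]) (use that Z in auto)
    then have "boxcox g 2 * (y powr (g - 1) * boxcox r y) - y powr (g - 1) * H2 g r 2 = 0"
      using DERIV_const DERIV_unique by blast
    then have "y powr (g - 1) * (boxcox g 2 * boxcox r y - H2 g r 2) = 0"
      by (simp add: algebra_simps)
    then show ?thesis using that by simp
  qed
  have "H2 g r 2 = 0" using eq[of 1] by simp
  then have "boxcox g 2 * boxcox r 2 = 0" using eq[of 2] by simp
  then show False using boxcox_two_ne by simp
qed

lemma conv_monotone_comp:
  fixes Fj :: "nat \<Rightarrow> real \<Rightarrow> real" and G :: "real \<Rightarrow> real"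
  assumes mono: "\<And>j x y. x \<le> y \<Longrightarrow> Fj j x \<le> Fj j y"
    and conv: "\<And>x. (\<lambda>j. Fj j x) \<longlonglongrightarrow> G x"
    and cont: "isCont G z"
    and jl: "filterlim jn at_top sequentially"
    and zl: "zn \<longlonglongrightarrow> z"
  shows "(\<lambda>n. Fj (jn n) (zn n)) \<longlonglongrightarrow> G z"
proof (rule tendstoI)
  fix e :: real assume e: "e > 0"
  obtain d where d: "d > 0" "\<And>w. dist w z < d \<Longrightarrow> dist (G w) (G z) < e / 2"
    using cont e unfolding continuous_at_eps_delta by (meson half_gt_zero)
  have c1: "(\<lambda>n. Fj (jn n) (z - d/2)) \<longlonglongrightarrow> G (z - d/2)"
    using filterlim_compose[OF conv jl] .
  have c2: "(\<lambda>n. Fj (jn n) (z + d/2)) \<longlonglongrightarrow> G (z + d/2)"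
    using filterlim_compose[OF conv jl] .
  have g1: "dist (G (z - d/2)) (G z) < e/2" using d by (intro d(2)) (simp add: dist_real_def)
  have g2: "dist (G (z + d/2)) (G z) < e/2" using d by (intro d(2)) (simp add: dist_real_def)
  have ev1: "\<forall>\<^sub>F n in sequentially. dist (Fj (jn n) (z - d/2)) (G (z - d/2)) < e/2"
    using tendstoD[OF c1, of "e/2"] e by simp
  have ev2: "\<forall>\<^sub>F n in sequentially. dist (Fj (jn n) (z + d/2)) (G (z + d/2)) < e/2"
    using tendstoD[OF c2, of "e/2"] e by simp
  have ev3: "\<forall>\<^sub>F n in sequentially. dist (zn n) z < d/2"
    using tendstoD[OF zl, of "d/2"] d by simp
  show "\<forall>\<^sub>F n in sequentially. dist (Fj (jn n) (zn n)) (G z) < e"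
  proof (rule eventually_mono[OF eventually_conj[OF ev1 eventually_conj[OF ev2 ev3]]])
    fix n assume H: "dist (Fj (jn n) (z - d/2)) (G (z - d/2)) < e/2 \<and>
        dist (Fj (jn n) (z + d/2)) (G (z + d/2)) < e/2 \<and> dist (zn n) z < d/2"
    then have "\<bar>zn n - z\<bar> < d/2" by (simp add: dist_real_def)
    then have "z - d/2 \<le> zn n" "zn n \<le> z + d/2" by linarith+
    then have "Fj (jn n) (z - d/2) \<le> Fj (jn n) (zn n)" "Fj (jn n) (zn n) \<le> Fj (jn n) (z + d/2)"
      using mono by auto
    then show "dist (Fj (jn n) (zn n)) (G z) < e"
      using H g1 g2 unfolding dist_real_def abs_less_iff by linarith
  qed
qed



lemma GEV_cont: "isCont (GEV g) z"
proof (cases "g = 0")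
  case True
  have e: "GEV g = (\<lambda>z. exp (- exp (- z)))" using True by (auto simp: GEV_def fun_eq_iff)
  show ?thesis unfolding e by (intro continuous_intros)
next
  case g: False
  consider "1 + g * z > 0" | "1 + g * z < 0" | "1 + g * z = 0" by linarith
  then show ?thesis
  proof cases
    case 1
    have op: "open {w. 0 < 1 + g * w}" by (intro open_Collect_less continuous_intros)
    have ev: "\<forall>\<^sub>F w in nhds z. 0 < 1 + g * w"
      using eventually_nhds_in_open[OF op] 1 by simp
    have "\<forall>\<^sub>F w in nhds z. GEV g w = exp (- ((1 + g * w) powr (- 1 / g)))"
      by (rule eventually_mono[OF ev]) (use g in \<open>auto simp: GEV_def\<close>)
    moreover have "isCont (\<lambda>w. exp (- ((1 + g * w) powr (- 1 / g)))) z"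
      using 1 by (intro continuous_intros) auto
    ultimately show ?thesis using isCont_cong[of "GEV g" "\<lambda>w. exp (- ((1 + g * w) powr (- 1 / g)))" z] by simp
  next
    case 2
    have op: "open {w. 1 + g * w < 0}" by (intro open_Collect_less continuous_intros)
    have ev: "\<forall>\<^sub>F w in nhds z. 1 + g * w < 0"
      using eventually_nhds_in_open[OF op] 2 by simp
    have "\<forall>\<^sub>F w in nhds z. GEV g w = (if g > 0 then 0 else 1)"
      by (rule eventually_mono[OF ev]) (use g in \<open>auto simp: GEV_def\<close>)
    then show ?thesis using isCont_cong[of "GEV g" "\<lambda>_. if g > 0 then 0 else 1" z] continuous_const by simp
  next
    case 3
    then have z: "z = - 1 / g" using g by (simp add: field_simps)
    show ?thesis unfolding continuous_at_split
    proof
      show "continuous (at_left z) (GEV g)"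
      proof (cases "g > 0")
        case True
        have "GEV g z = 0" using True 3 by (simp add: GEV_def)
        moreover have "\<forall>\<^sub>F w in at_left z. GEV g w = 0"
          unfolding eventually_at_left_field
        proof (intro exI[of _ "z - 1"] conjI allI impI)
          fix w assume "z - 1 < w" "w < z"
          then have "g * w < g * z" using True by (intro mult_strict_left_mono) auto
          then have "1 + g * w \<le> 0" using 3 by linarith
          then show "GEV g w = 0" using True by (simp add: GEV_def)
        qed simp
        ultimately show ?thesis unfolding continuous_within
          by (simp add: tendsto_cong[of "GEV g" "\<lambda>_. 0"])
      next
        case False
        then have gn: "g < 0" using g by simp
        have "GEV g z = 1" using gn 3 by (simp add: GEV_def)
        moreover have "\<forall>\<^sub>F w in at_left z. GEV g w = exp (- ((1 + g * w) powr (- 1 / g)))"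
          unfolding eventually_at_left_field
        proof (intro exI[of _ "z - 1"] conjI allI impI)
          fix w assume "z - 1 < w" "w < z"
          then have "g * z < g * w" using gn by (intro mult_strict_left_mono_neg) auto
          then have "\<not> 1 + g * w \<le> 0" using 3 by linarith
          then show "GEV g w = exp (- ((1 + g * w) powr (- 1 / g)))" using gn by (simp add: GEV_def)
        qed simp
        moreover have "((\<lambda>w. exp (- ((1 + g * w) powr (- 1 / g)))) \<longlongrightarrow> 1) (at_left z)"
          unfolding z using gn by real_asymp
        ultimately show ?thesis unfolding continuous_within
          using tendsto_cong by fastforce
      qed
    next
      show "continuous (at_right z) (GEV g)"
      proof (cases "g > 0")
        case True
        have "GEV g z = 0" using True 3 by (simp add: GEV_def)
        moreover have "\<forall>\<^sub>F w in at_right z. GEV g w = exp (- ((1 + g * w) powr (- 1 / g)))"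
          unfolding eventually_at_right_field
        proof (intro exI[of _ "z + 1"] conjI allI impI)
          fix w assume "z < w" "w < z + 1"
          then have "g * z < g * w" using True by (intro mult_strict_left_mono) auto
          then have "\<not> 1 + g * w \<le> 0" using 3 by linarith
          then show "GEV g w = exp (- ((1 + g * w) powr (- 1 / g)))" using True by (simp add: GEV_def)
        qed simp
        moreover have "((\<lambda>w. exp (- ((1 + g * w) powr (- 1 / g)))) \<longlongrightarrow> 0) (at_right z)"
          unfolding z using True by real_asymp
        ultimately show ?thesis unfolding continuous_within
          using tendsto_cong by fastforce
      next
        case False
        then have gn: "g < 0" using g by simp
        have "GEV g z = 1" using gn 3 by (simp add: GEV_def)
        moreover have "\<forall>\<^sub>F w in at_right z. GEV g w = 1"
          unfolding eventually_at_right_field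
        proof (intro exI[of _ "z + 1"] conjI allI impI)
          fix w assume "z < w" "w < z + 1"
          then have "g * w < g * z" using gn by (intro mult_strict_left_mono_neg) auto
          then have "1 + g * w \<le> 0" using 3 by linarith
          then show "GEV g w = 1" using gn by (simp add: GEV_def)
        qed simp
        ultimately show ?thesis unfolding continuous_within
          by (simp add: tendsto_cong[of "GEV g" "\<lambda>_. 1"])
      qed
    qed
  qed
qed



theorem lemma2p2:
  fixes M :: "'a measure" and X :: "nat \<Rightarrow> 'a \<Rightarrow> real"
    and F a b A :: "real \<Rightarrow> real"
    and \<gamma> \<rho> \<theta> lam :: real
    and m k :: "nat \<Rightarrow> nat"
  assumes "prob_space M"
    and stat: "strictly_stationary M X"
    and F_def: "\<And>x. F x = measure M {\<omega> \<in> space M. X 1 \<omega> \<le> x}"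
    and F_cont: "continuous_on UNIV F"
    and rho: "\<rho> \<le> 0"
    and theta: "0 < \<theta>" "\<theta> \<le> 1"
    and b_def: "\<And>t. t > 1 \<Longrightarrow> b t = gen_inv F (exp (- 1 / t))"
    and a_pos: "\<And>s. a s > 0"
    and A_sign: "(\<forall>\<^sub>F s in at_top. A s > 0) \<or> (\<forall>\<^sub>F s in at_top. A s < 0)"
    and A_lim: "(A \<longlongrightarrow> 0) at_top"
    and second_order: "\<And>x. x > 0 \<Longrightarrow>
       ((\<lambda>s. (1 / A s) * ((b (s * x) - b s) / a s
              - (LBINT u=ereal 1..ereal x. u powr (\<gamma> - 1)))) \<longlongrightarrow> H2 \<gamma> \<rho> x) at_top"
    and m_lim: "filterlim m at_top sequentially"
    and k_lim: "filterlim k at_top sequentially"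
    and lam: "(\<lambda>n. sqrt (real (k n)) * A (real (m n))) \<longlonglongrightarrow> lam"
  shows
   "let a\<theta> = (\<lambda>t. a t * \<theta> powr \<gamma>);
        b\<theta> = (\<lambda>t. b t + a t * boxcox \<gamma> \<theta>)
    in ((\<lambda>n. sqrt (real (k n)) * (a\<theta> (real (m n)) / a (\<theta> * real (m n)) - 1)
              - (- lam * boxcox \<rho> \<theta>)) \<longlonglongrightarrow> 0)
     \<and> ((\<lambda>n. sqrt (real (k n)) * ((b\<theta> (real (m n)) - b (\<theta> * real (m n))) / a (\<theta> * real (m n)))
              - (lam * \<theta> powr \<rho> * H2 \<gamma> \<rho> (1 / \<theta>)
                 + lam * boxcox \<rho> \<theta> * (if \<gamma> = 0 then - ln \<theta> else (\<theta> powr (- \<gamma>) - 1) / \<gamma>)))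
           \<longlonglongrightarrow> 0)
     \<and> ((\<forall>z. (\<lambda>j. measure M {\<omega> \<in> space M. Mmax X j \<omega> \<le> a\<theta> (real j) * z + b\<theta> (real j)})
                 \<longlonglongrightarrow> GEV \<gamma> z)
        \<longrightarrow> (\<forall>z. (\<lambda>n. measure M {\<omega> \<in> space M.
                      Mmax X (m n) \<omega> \<le> a (\<theta> * real (m n)) * z + b (\<theta> * real (m n))})
                 \<longlonglongrightarrow> GEV \<gamma> z))"

proof -
  interpret P: prob_space M by fact
  define I where "I = (\<lambda>x::real. LBINT u=ereal 1..ereal x. u powr (\<gamma> - 1))"
  have I_eq: "\<And>x. x > 0 \<Longrightarrow> I x = boxcox \<gamma> x" unfolding I_def by (rule int_powr_boxcox)
  define Q where "Q = (\<lambda>s x. (1 / A s) * ((b (s * x) - b s) / a s - I x))"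
  have sl: "filterlim (\<lambda>n. real (m n)) at_top sequentially"
    by (rule filterlim_compose[OF filterlim_real_sequentially m_lim])
  have tl: "filterlim (\<lambda>n. \<theta> * real (m n)) at_top sequentially"
    using filterlim_tendsto_pos_mult_at_top[OF tendsto_const theta(1) sl] .
  have Qs: "(\<lambda>n. Q (real (m n)) x) \<longlonglongrightarrow> H2 \<gamma> \<rho> x" if "x > 0" for x
    unfolding Q_def I_def by (rule filterlim_compose[OF second_order[OF that] sl])
  have Qt: "(\<lambda>n. Q (\<theta> * real (m n)) x) \<longlonglongrightarrow> H2 \<gamma> \<rho> x" if "x > 0" for x
    unfolding Q_def I_def by (rule filterlim_compose[OF second_order[OF that] tl])
  have Anz: "\<forall>\<^sub>F s in at_top. A s \<noteq> 0"
    using A_sign by (auto elim: eventually_mono)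
  have evA: "\<forall>\<^sub>F n in sequentially. A (real (m n)) \<noteq> 0 \<and> A (\<theta> * real (m n)) \<noteq> 0"
    using eventually_compose_filterlim[OF Anz sl] eventually_compose_filterlim[OF Anz tl]
    by (rule eventually_conj)
  have As0: "(\<lambda>n. A (real (m n))) \<longlonglongrightarrow> 0"
    by (rule filterlim_compose[OF A_lim sl])
  obtain y1 y2 where y: "y1 > 0" "y2 > 0"
      and det: "boxcox \<gamma> y1 * H2 \<gamma> \<rho> y2 - boxcox \<gamma> y2 * H2 \<gamma> \<rho> y1 \<noteq> 0"
    using H2_indep by blast
  define r where "r = (\<lambda>n. a (\<theta> * real (m n)) / a (real (m n)))"
  define u where "u = (\<lambda>n. (r n - \<theta> powr \<gamma>) / A (real (m n)))"
  define w where "w = (\<lambda>n. r n * A (\<theta> * real (m n)) / A (real (m n)))"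
  have keyev: "\<forall>\<^sub>F n in sequentially. Q (real (m n)) (\<theta> * y) - Q (real (m n)) \<theta>
      = u n * boxcox \<gamma> y + w n * Q (\<theta> * real (m n)) y" if "y > 0" for y
  proof (rule eventually_mono[OF evA])
    fix n assume H: "A (real (m n)) \<noteq> 0 \<and> A (\<theta> * real (m n)) \<noteq> 0"
    have e1: "real (m n) * (\<theta> * y) = \<theta> * real (m n) * y" by simp
    have e2: "real (m n) * \<theta> = \<theta> * real (m n)" by simp
    have ty: "\<theta> * y > 0" using theta that by simp
    have bm: "boxcox \<gamma> (\<theta> * y) = \<theta> powr \<gamma> * boxcox \<gamma> y + boxcox \<gamma> \<theta>"
      using boxcox_mult theta that by blast
    have ap: "a (real (m n)) > 0" "a (\<theta> * real (m n)) > 0" using a_pos by auto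
    show "Q (real (m n)) (\<theta> * y) - Q (real (m n)) \<theta>
      = u n * boxcox \<gamma> y + w n * Q (\<theta> * real (m n)) y"
      unfolding Q_def u_def w_def r_def e1 e2 I_eq[OF ty] I_eq[OF that] I_eq[OF theta(1)] bm
      using H ap by (simp add: field_simps)
  qed
  define E where "E = (\<lambda>y n. Q (real (m n)) (\<theta> * y) - Q (real (m n)) \<theta>)"
  define q where "q = (\<lambda>y n. Q (\<theta> * real (m n)) y)"
  have Elim: "E y \<longlonglongrightarrow> H2 \<gamma> \<rho> (\<theta> * y) - H2 \<gamma> \<rho> \<theta>" if "y > 0" for y
    unfolding E_def using that theta by (intro tendsto_intros Qs) auto
  have qlim: "q y \<longlonglongrightarrow> H2 \<gamma> \<rho> y" if "y > 0" for y
    unfolding q_def using that by (rule Qt)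
  define \<Delta> where "\<Delta> = (\<lambda>n. boxcox \<gamma> y1 * q y2 n - boxcox \<gamma> y2 * q y1 n)"
  have \<Delta>lim: "\<Delta> \<longlonglongrightarrow> boxcox \<gamma> y1 * H2 \<gamma> \<rho> y2 - boxcox \<gamma> y2 * H2 \<gamma> \<rho> y1"
    unfolding \<Delta>_def by (intro tendsto_intros qlim y)
  have \<Delta>nz: "\<forall>\<^sub>F n in sequentially. \<Delta> n \<noteq> 0"
    using tendsto_imp_eventually_ne[OF \<Delta>lim det] .
  have uev: "\<forall>\<^sub>F n in sequentially. u n = (E y1 n * q y2 n - E y2 n * q y1 n) / \<Delta> n"
  proof (rule eventually_mono[OF eventually_conj[OF \<Delta>nz eventually_conj[OF keyev[OF y(1)] keyev[OF y(2)]]]])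
    fix n assume H: "\<Delta> n \<noteq> 0 \<and> (Q (real (m n)) (\<theta> * y1) - Q (real (m n)) \<theta> =
          u n * boxcox \<gamma> y1 + w n * Q (\<theta> * real (m n)) y1) \<and>
         (Q (real (m n)) (\<theta> * y2) - Q (real (m n)) \<theta> =
          u n * boxcox \<gamma> y2 + w n * Q (\<theta> * real (m n)) y2)"
    then have "E y1 n * q y2 n - E y2 n * q y1 n = u n * \<Delta> n"
      unfolding E_def q_def \<Delta>_def by (simp add: algebra_simps)
    then show "u n = (E y1 n * q y2 n - E y2 n * q y1 n) / \<Delta> n" using H by simp
  qed
  have Lid: "H2 \<gamma> \<rho> (\<theta> * y) - H2 \<gamma> \<rho> \<theta> = \<theta> powr (\<gamma> + \<rho>) * H2 \<gamma> \<rho> y + \<theta> powr \<gamma> * boxcox \<rho> \<theta> * boxcox \<gamma> y"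
    if "y > 0" for y using H2_mult[OF theta(1) that] .
  have ulim: "u \<longlonglongrightarrow> \<theta> powr \<gamma> * boxcox \<rho> \<theta>"
  proof -
    have "(\<lambda>n. (E y1 n * q y2 n - E y2 n * q y1 n) / \<Delta> n) \<longlonglongrightarrow>
       ((H2 \<gamma> \<rho> (\<theta> * y1) - H2 \<gamma> \<rho> \<theta>) * H2 \<gamma> \<rho> y2 - (H2 \<gamma> \<rho> (\<theta> * y2) - H2 \<gamma> \<rho> \<theta>) * H2 \<gamma> \<rho> y1)
        / (boxcox \<gamma> y1 * H2 \<gamma> \<rho> y2 - boxcox \<gamma> y2 * H2 \<gamma> \<rho> y1)"
      by (intro tendsto_intros Elim qlim y \<Delta>lim det)
    also have "((H2 \<gamma> \<rho> (\<theta> * y1) - H2 \<gamma> \<rho> \<theta>) * H2 \<gamma> \<rho> y2 - (H2 \<gamma> \<rho> (\<theta> * y2) - H2 \<gamma> \<rho> \<theta>) * H2 \<gamma> \<rho> y1)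
        / (boxcox \<gamma> y1 * H2 \<gamma> \<rho> y2 - boxcox \<gamma> y2 * H2 \<gamma> \<rho> y1) = \<theta> powr \<gamma> * boxcox \<rho> \<theta>"
      unfolding Lid[OF y(1)] Lid[OF y(2)] using det by (simp add: field_simps)
    finally show ?thesis using tendsto_cong[OF uev] by simp
  qed
  have rev: "\<forall>\<^sub>F n in sequentially. r n = \<theta> powr \<gamma> + A (real (m n)) * u n"
    by (rule eventually_mono[OF evA]) (simp add: u_def)
  have rlim: "r \<longlonglongrightarrow> \<theta> powr \<gamma>"
  proof -
    have "(\<lambda>n. \<theta> powr \<gamma> + A (real (m n)) * u n) \<longlonglongrightarrow> \<theta> powr \<gamma> + 0 * (\<theta> powr \<gamma> * boxcox \<rho> \<theta>)"
      by (intro tendsto_intros As0 ulim)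
    then show ?thesis using tendsto_cong[OF rev] by simp
  qed
  have tg: "\<theta> powr \<gamma> > 0" using theta by simp
  have rpos: "r n > 0" for n unfolding r_def using a_pos by simp
  have sqA: "(\<lambda>n. sqrt (real (k n)) * A (real (m n))) \<longlonglongrightarrow> lam" by (rule lam)
  have part1: "(\<lambda>n. sqrt (real (k n)) * (a (real (m n)) * \<theta> powr \<gamma> / a (\<theta> * real (m n)) - 1)
              - (- lam * boxcox \<rho> \<theta>)) \<longlonglongrightarrow> 0"
  proof -
    have ev: "\<forall>\<^sub>F n in sequentially. sqrt (real (k n)) * (a (real (m n)) * \<theta> powr \<gamma> / a (\<theta> * real (m n)) - 1)
              - (- lam * boxcox \<rho> \<theta>) = - (sqrt (real (k n)) * A (real (m n))) * u n / r n + lam * boxcox \<rho> \<theta>"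
    proof (rule eventually_mono[OF evA])
      fix n assume H: "A (real (m n)) \<noteq> 0 \<and> A (\<theta> * real (m n)) \<noteq> 0"
      have ap: "a (real (m n)) > 0" "a (\<theta> * real (m n)) > 0" using a_pos by auto
      show "sqrt (real (k n)) * (a (real (m n)) * \<theta> powr \<gamma> / a (\<theta> * real (m n)) - 1)
              - (- lam * boxcox \<rho> \<theta>) = - (sqrt (real (k n)) * A (real (m n))) * u n / r n + lam * boxcox \<rho> \<theta>"
        unfolding u_def r_def using H ap by (simp add: field_simps)
    qed
    have "(\<lambda>n. - (sqrt (real (k n)) * A (real (m n))) * u n / r n + lam * boxcox \<rho> \<theta>) \<longlonglongrightarrow>
        - lam * (\<theta> powr \<gamma> * boxcox \<rho> \<theta>) / \<theta> powr \<gamma> + lam * boxcox \<rho> \<theta>"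
      using tg by (intro tendsto_intros sqA ulim rlim) auto
    then show ?thesis using tg tendsto_cong[OF ev] by simp
  qed
  have Qth: "(\<lambda>n. Q (real (m n)) \<theta>) \<longlonglongrightarrow> H2 \<gamma> \<rho> \<theta>" by (rule Qs[OF theta(1)])
  have bc_inv: "boxcox \<gamma> (1 / \<theta>) = (if \<gamma> = 0 then - ln \<theta> else (\<theta> powr (- \<gamma>) - 1) / \<gamma>)"
    using theta by (simp add: boxcox_def ln_div powr_minus_divide powr_divide)
  have part2: "(\<lambda>n. sqrt (real (k n)) * ((b (real (m n)) + a (real (m n)) * boxcox \<gamma> \<theta> - b (\<theta> * real (m n))) / a (\<theta> * real (m n)))
              - (lam * \<theta> powr \<rho> * H2 \<gamma> \<rho> (1 / \<theta>)
                 + lam * boxcox \<rho> \<theta> * (if \<gamma> = 0 then - ln \<theta> else (\<theta> powr (- \<gamma>) - 1) / \<gamma>)))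
           \<longlonglongrightarrow> 0"
  proof -
    define C where "C = lam * \<theta> powr \<rho> * H2 \<gamma> \<rho> (1 / \<theta>)
                 + lam * boxcox \<rho> \<theta> * (if \<gamma> = 0 then - ln \<theta> else (\<theta> powr (- \<gamma>) - 1) / \<gamma>)"
    have ev: "\<forall>\<^sub>F n in sequentially. sqrt (real (k n)) * ((b (real (m n)) + a (real (m n)) * boxcox \<gamma> \<theta> - b (\<theta> * real (m n))) / a (\<theta> * real (m n)))
              - C = - (sqrt (real (k n)) * A (real (m n))) * Q (real (m n)) \<theta> / r n - C"
    proof (rule eventually_mono[OF evA])
      fix n assume H: "A (real (m n)) \<noteq> 0 \<and> A (\<theta> * real (m n)) \<noteq> 0"
      have ap: "a (real (m n)) > 0" "a (\<theta> * real (m n)) > 0" using a_pos by auto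
      have e2: "real (m n) * \<theta> = \<theta> * real (m n)" by simp
      show "sqrt (real (k n)) * ((b (real (m n)) + a (real (m n)) * boxcox \<gamma> \<theta> - b (\<theta> * real (m n))) / a (\<theta> * real (m n)))
              - C = - (sqrt (real (k n)) * A (real (m n))) * Q (real (m n)) \<theta> / r n - C"
        unfolding Q_def r_def e2 I_eq[OF theta(1)] using H ap by (simp add: field_simps)
    qed
    have "(\<lambda>n. - (sqrt (real (k n)) * A (real (m n))) * Q (real (m n)) \<theta> / r n - C) \<longlonglongrightarrow>
        - lam * H2 \<gamma> \<rho> \<theta> / \<theta> powr \<gamma> - C"
      using tg by (intro tendsto_intros sqA Qth rlim) auto
    moreover have "- lam * H2 \<gamma> \<rho> \<theta> / \<theta> powr \<gamma> - C = 0"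
    proof -
      have "H2 \<gamma> \<rho> (\<theta> * (1 / \<theta>)) - H2 \<gamma> \<rho> \<theta> = \<theta> powr (\<gamma> + \<rho>) * H2 \<gamma> \<rho> (1 / \<theta>) + \<theta> powr \<gamma> * boxcox \<rho> \<theta> * boxcox \<gamma> (1 / \<theta>)"
        using theta by (intro Lid) simp
      then have X: "H2 \<gamma> \<rho> \<theta> = - (\<theta> powr \<gamma> * (\<theta> powr \<rho> * H2 \<gamma> \<rho> (1 / \<theta>) + boxcox \<rho> \<theta> * boxcox \<gamma> (1 / \<theta>)))"
        using theta by (simp add: powr_add algebra_simps)
      show ?thesis unfolding C_def bc_inv[symmetric] X using tg by (simp add: field_simps)
    qed
    ultimately show ?thesis using tendsto_cong[OF ev] unfolding C_def by simp
  qed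
  have part3: "(\<forall>z. (\<lambda>j. measure M {\<omega> \<in> space M. Mmax X j \<omega> \<le> a (real j) * \<theta> powr \<gamma> * z + (b (real j) + a (real j) * boxcox \<gamma> \<theta>)})
                 \<longlonglongrightarrow> GEV \<gamma> z)
        \<longrightarrow> (\<forall>z. (\<lambda>n. measure M {\<omega> \<in> space M.
                      Mmax X (m n) \<omega> \<le> a (\<theta> * real (m n)) * z + b (\<theta> * real (m n))})
                 \<longlonglongrightarrow> GEV \<gamma> z)"
  proof (intro impI allI)
    fix z
    assume hyp: "\<forall>z. (\<lambda>j. measure M {\<omega> \<in> space M. Mmax X j \<omega> \<le> a (real j) * \<theta> powr \<gamma> * z + (b (real j) + a (real j) * boxcox \<gamma> \<theta>)})
                 \<longlonglongrightarrow> GEV \<gamma> z"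
    define Fj where "Fj = (\<lambda>j z. measure M {\<omega> \<in> space M. Mmax X j \<omega> \<le> a (real j) * \<theta> powr \<gamma> * z + (b (real j) + a (real j) * boxcox \<gamma> \<theta>)})"
    have meas: "Mmax X j \<in> borel_measurable M" for j
    proof -
      have "(\<lambda>\<omega>. Max ((\<lambda>i. X i \<omega>) ` {1..j})) \<in> borel_measurable M"
        using stat unfolding strictly_stationary_def by (intro borel_measurable_Max) auto
      then show ?thesis unfolding Mmax_def[abs_def] .
    qed
    have mono: "Fj j x \<le> Fj j y" if "x \<le> y" for j x y
    proof -
      have "a (real j) * \<theta> powr \<gamma> * x \<le> a (real j) * \<theta> powr \<gamma> * y"
        using that a_pos[of "real j"] tg by (intro mult_left_mono) auto
      then show ?thesis unfolding Fj_def
        by (intro P.finite_measure_mono) (use meas[of j] in \<open>auto simp: borel_measurable_iff_le\<close>)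
    qed
    define zn where "zn = (\<lambda>n. z * r n / \<theta> powr \<gamma> + A (real (m n)) * Q (real (m n)) \<theta> / \<theta> powr \<gamma>)"
    have znl: "zn \<longlonglongrightarrow> z"
    proof -
      have "zn \<longlonglongrightarrow> z * \<theta> powr \<gamma> / \<theta> powr \<gamma> + 0 * H2 \<gamma> \<rho> \<theta> / \<theta> powr \<gamma>"
        unfolding zn_def using tg by (intro tendsto_intros rlim As0 Qth) auto
      then show ?thesis using tg by simp
    qed
    have "(\<lambda>n. Fj (m n) (zn n)) \<longlonglongrightarrow> GEV \<gamma> z"
      proof (rule conv_monotone_comp[OF _ _ GEV_cont m_lim znl])
      show "\<And>x. (\<lambda>j. Fj j x) \<longlonglongrightarrow> GEV \<gamma> x" unfolding Fj_def using hyp by blast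
    qed (rule mono)
    moreover have "\<forall>\<^sub>F n in sequentially. Fj (m n) (zn n) = measure M {\<omega> \<in> space M.
                      Mmax X (m n) \<omega> \<le> a (\<theta> * real (m n)) * z + b (\<theta> * real (m n))}"
    proof (rule eventually_mono[OF evA])
      fix n assume H: "A (real (m n)) \<noteq> 0 \<and> A (\<theta> * real (m n)) \<noteq> 0"
      have ap: "a (real (m n)) > 0" "a (\<theta> * real (m n)) > 0" using a_pos by auto
      have e2: "real (m n) * \<theta> = \<theta> * real (m n)" by simp
      have "a (real (m n)) * \<theta> powr \<gamma> * zn n + (b (real (m n)) + a (real (m n)) * boxcox \<gamma> \<theta>)
          = a (\<theta> * real (m n)) * z + b (\<theta> * real (m n))"
        unfolding zn_def Q_def r_def e2 I_eq[OF theta(1)] using H ap tg by (simp add: field_simps)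
      then show "Fj (m n) (zn n) = measure M {\<omega> \<in> space M.
                      Mmax X (m n) \<omega> \<le> a (\<theta> * real (m n)) * z + b (\<theta> * real (m n))}"
        unfolding Fj_def by simp
    qed
    ultimately show "(\<lambda>n. measure M {\<omega> \<in> space M.
                      Mmax X (m n) \<omega> \<le> a (\<theta> * real (m n)) * z + b (\<theta> * real (m n))})
                 \<longlonglongrightarrow> GEV \<gamma> z" using tendsto_cong by fastforce
  qed
  show ?thesis unfolding Let_def using part1 part2 part3 by simp
qed

end
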